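(* For each $n \in \mathbb N$ and $q \in \{0,1,\dots,n-1\}$, $$\sum_{\mathbf m \in S_{n,q}} \pi_{\mathbf m} = \sum_{\substack{\mathbf k=(k_1,\dots,k_n)\in\{0,1,2,\dots\}^n\\ \sum_{j=1}^n j k_j = n,\ \sum_{j=1}^n k_j = n-q}} \frac{1}{k_1!\,k_2!\cdots k_n!\; 2^{k_2}\,3^{k_3}\cdots n^{k_n}}.$$
   Context: $S_{n,q} = \{\mathbf m=(m_1,\dots,m_{n-q}) \in \{0,1,2,\dots\}^{n-q} : m_1+\cdots+m_{n-q}=q\}$, and for $\mathbf m\in S_{n,q}$, $\pi_{\mathbf m} = \prod_{i=1}^{n-q}[m_i+m_{i+1}+\cdots+m_{n-q} + (n-q-i+1)]^{-1}$. *)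

theory Defs
  imports Complex_Main
begin

text \<open>Tuples (m_1,...,m_N) of nonnegative integers are encoded as functions
  nat => nat that vanish outside the index range {1..N}.\<close>

definition S_set :: "nat \<Rightarrow> nat \<Rightarrow> (nat \<Rightarrow> nat) set" where
  "S_set n q = {m. (\<forall>i. i \<notin> {1..n-q} \<longrightarrow> m i = 0) \<and> (\<Sum>i=1..n-q. m i) = q}"

definition pi_m :: "nat \<Rightarrow> nat \<Rightarrow> (nat \<Rightarrow> nat) \<Rightarrow> real" where
  "pi_m n q m = (\<Prod>i=1..n-q. 1 / real ((\<Sum>j=i..n-q. m j) + (n - q - i + 1)))"

definition K_set :: "nat \<Rightarrow> nat \<Rightarrow> (nat \<Rightarrow> nat) set" where
  "K_set n q = {k. (\<forall>j. j \<notin> {1..n} \<longrightarrow> k j = 0) \<and>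
      (\<Sum>j=1..n. j * k j) = n \<and> (\<Sum>j=1..n. k j) = n - q}"

end

theory Submission
  imports Defs
begin

definition Sg :: "nat \<Rightarrow> nat \<Rightarrow> (nat \<Rightarrow> nat) set" where
  "Sg N s = {m. (\<forall>i. i \<notin> {1..N} \<longrightarrow> m i = 0) \<and> (\<Sum>i=1..N. m i) = s}"

definition P :: "nat \<Rightarrow> (nat \<Rightarrow> nat) \<Rightarrow> real" where
  "P N m = (\<Prod>i=1..N. 1 / real ((\<Sum>j=i..N. m j) + (N - i + 1)))"

definition A :: "nat \<Rightarrow> nat \<Rightarrow> real" where
  "A N s = sum (P N) (Sg N s)"

definition Kg :: "nat \<Rightarrow> nat \<Rightarrow> (nat \<Rightarrow> nat) set" where
  "Kg n N = {k. (\<forall>j. j \<notin> {1..n} \<longrightarrow> k j = 0) \<and>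
      (\<Sum>j=1..n. j * k j) = n \<and> (\<Sum>j=1..n. k j) = N}"

definition W :: "nat \<Rightarrow> (nat \<Rightarrow> nat) \<Rightarrow> real" where
  "W n k = 1 / (\<Prod>j=1..n. fact (k j) * real j ^ k j)"

definition B :: "nat \<Rightarrow> nat \<Rightarrow> real" where
  "B n N = sum (W n) (Kg n N)"

lemma fin_supp: "finite {m::nat\<Rightarrow>nat. (\<forall>i. i \<notin> {1..N} \<longrightarrow> m i = 0) \<and> (\<forall>i. m i \<le> b)}"
proof -
  have "finite {f::nat\<Rightarrow>nat. \<forall>x. (x \<in> {1..N} \<longrightarrow> f x \<in> {0..b}) \<and> (x \<notin> {1..N} \<longrightarrow> f x = 0)}"
    by (rule finite_set_of_finite_funs) auto
  then show ?thesis by (rule finite_subset[rotated]) auto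
qed

lemma fin_Sg: "finite (Sg N s)"
proof -
  have "Sg N s \<subseteq> {m::nat\<Rightarrow>nat. (\<forall>i. i \<notin> {1..N} \<longrightarrow> m i = 0) \<and> (\<forall>i. m i \<le> s)}"
  proof safe
    fix m i assume m: "m \<in> Sg N s"
    show "m i \<le> s"
    proof (cases "i \<in> {1..N}")
      case True
      then have "m i \<le> (\<Sum>i=1..N. m i)" by (intro member_le_sum) auto
      then show ?thesis using m by (simp add: Sg_def)
    next
      case False then show ?thesis using m by (simp add: Sg_def)
    qed
  qed (auto simp: Sg_def)
  then show ?thesis using fin_supp finite_subset by blast
qed

lemma fin_Kg: "finite (Kg n N)"
proof -
  have "Kg n N \<subseteq> {m::nat\<Rightarrow>nat. (\<forall>i. i \<notin> {1..n} \<longrightarrow> m i = 0) \<and> (\<forall>i. m i \<le> n)}"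
  proof safe
    fix m i assume m: "m \<in> Kg n N"
    show "m i \<le> n"
    proof (cases "i \<in> {1..n}")
      case True
      then have "i * m i \<le> (\<Sum>j=1..n. j * m j)" by (intro member_le_sum) auto
      moreover have "m i \<le> i * m i" using True by simp
      moreover have "(\<Sum>j=1..n. j * m j) = n" using m by (simp add: Kg_def)
      ultimately show ?thesis by linarith
    next
      case False then show ?thesis using m by (simp add: Kg_def)
    qed
  qed (auto simp: Kg_def)
  then show ?thesis using fin_supp finite_subset by blast
qed

lemma sum_upd:
  fixes g :: "nat \<Rightarrow> nat \<Rightarrow> 'b::comm_monoid_add"
  assumes "finite S" "j \<in> S"
  shows "(\<Sum>i\<in>S. g i ((f(j:=x)) i)) + g j (f j) = (\<Sum>i\<in>S. g i (f i)) + g j x"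
proof -
  have e: "(\<Sum>i\<in>S-{j}. g i ((f(j:=x)) i)) = (\<Sum>i\<in>S-{j}. g i (f i))"
    by (rule sum.cong) auto
  show ?thesis
    using assms by (simp add: sum.remove[OF assms] e add_ac)
qed

lemma sum_shrink:
  fixes f :: "nat \<Rightarrow> nat \<Rightarrow> 'b::comm_monoid_add"
  assumes "m \<le> n" "\<forall>i. i \<notin> {1..m} \<longrightarrow> k i = 0" "\<forall>i. f i 0 = 0"
  shows "(\<Sum>i=1..n. f i (k i)) = (\<Sum>i=1..m. f i (k i))"
  by (rule sum.mono_neutral_right) (use assms in auto)

lemma prod_shrink:
  fixes f :: "nat \<Rightarrow> nat \<Rightarrow> 'b::comm_monoid_mult"
  assumes "m \<le> n" "\<forall>i. i \<notin> {1..m} \<longrightarrow> k i = 0" "\<forall>i. f i 0 = 1"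
  shows "(\<Prod>i=1..n. f i (k i)) = (\<Prod>i=1..m. f i (k i))"
  by (rule prod.mono_neutral_right) (use assms in auto)

lemma W_shrink:
  assumes "m \<le> n" "\<forall>i. i \<notin> {1..m} \<longrightarrow> k i = 0"
  shows "W n k = W m k"
proof -
  have "(\<Prod>j=1..n. fact (k j) * real j ^ k j) = (\<Prod>j=1..m. fact (k j) * real j ^ k j)"
    using prod_shrink[OF assms, of "\<lambda>j v. fact v * real j ^ v"] by simp
  then show ?thesis by (simp add: W_def)
qed

lemma W_step:
  assumes j: "1 \<le> j" "j \<le> n" and kj: "1 \<le> k j"
  shows "real j * real (k j) * W n k = W n (k(j := k j - 1))"
proof -
  define g where "g = (\<lambda>k i. fact (k i) * real i ^ k i :: real)"
  have jin: "j \<in> {1..n}" using j by auto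
  have r1: "(\<Prod>i=1..n. g k i) = g k j * (\<Prod>i\<in>{1..n}-{j}. g k i)"
    by (rule prod.remove[OF _ jin]) simp
  have r2: "(\<Prod>i=1..n. g (k(j := k j - 1)) i) = g (k(j := k j - 1)) j * (\<Prod>i\<in>{1..n}-{j}. g k i)"
    by (subst prod.remove[OF _ jin]) (auto simp: g_def intro!: prod.cong)
  have kk: "k j = Suc (k j - 1)" using kj by simp
  have gj: "g k j = real j * real (k j) * g (k(j := k j - 1)) j"
  proof -
    obtain t where t: "k j = Suc t" using kj by (cases "k j") auto
    show ?thesis unfolding g_def by (simp add: t algebra_simps)
  qed
  have pos: "(\<Prod>i\<in>{1..n}-{j}. g k i) > 0" unfolding g_def
    by (rule prod_pos) auto
  have pos2: "g (k(j := k j - 1)) j > 0" unfolding g_def using j by simp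
  have "W n k = 1 / (\<Prod>i=1..n. g k i)" by (simp add: W_def g_def)
  moreover have "W n (k(j := k j - 1)) = 1 / (\<Prod>i=1..n. g (k(j := k j - 1)) i)"
    by (simp add: W_def g_def)
  ultimately show ?thesis using r1 r2 gj pos pos2 j kj by (simp add: field_simps)
qed

lemma Kg_down:
  assumes j: "1 \<le> j" "j \<le> n" and k: "k \<in> Kg n (Suc N)" and kj: "1 \<le> k j"
  shows "k(j := k j - 1) \<in> Kg (n - j) N"
proof -
  let ?k = "k(j := k j - 1)"
  have jin: "j \<in> {1..n}" using j by auto
  have supp: "\<forall>i. i \<notin> {1..n} \<longrightarrow> k i = 0" and s1: "(\<Sum>i=1..n. i * k i) = n"
    and s2: "(\<Sum>i=1..n. k i) = Suc N" using k by (auto simp: Kg_def)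
  have a1: "(\<Sum>i=1..n. i * ?k i) + j * k j = (\<Sum>i=1..n. i * k i) + j * (k j - 1)"
    using sum_upd[OF finite_atLeastAtMost jin, of "\<lambda>i v. i * v" k "k j - 1"] by simp
  have "j * k j = j * (k j - 1) + j" using kj
    by (cases "k j") auto
  then have t1: "(\<Sum>i=1..n. i * ?k i) = n - j" using a1 s1 by linarith
  have a2: "(\<Sum>i=1..n. ?k i) + k j = (\<Sum>i=1..n. k i) + (k j - 1)"
    using sum_upd[OF finite_atLeastAtMost jin, of "\<lambda>i v. v" k "k j - 1"] by simp
  then have t2: "(\<Sum>i=1..n. ?k i) = N" using s2 kj by linarith
  have supp2: "\<forall>i. i \<notin> {1..n-j} \<longrightarrow> ?k i = 0"
  proof (intro allI impI)
    fix i assume i: "i \<notin> {1..n-j}"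
    show "?k i = 0"
    proof (cases "i \<in> {1..n}")
      case True
      then have "i * ?k i \<le> (\<Sum>i=1..n. i * ?k i)" by (intro member_le_sum) auto
      then have "i * ?k i \<le> n - j" using t1 by simp
      moreover have "i > n - j" using i True by auto
      ultimately show ?thesis
      proof -
        assume a: "i * ?k i \<le> n - j" "i > n - j"
        show ?thesis
        proof (rule ccontr)
          assume "?k i \<noteq> 0"
          then have "i \<le> i * ?k i" by simp
          then show False using a by linarith
        qed
      qed
    next
      case False
      then have "i \<noteq> j" using jin by auto
      then show ?thesis using supp False by simp
    qed
  qed
  have u1: "(\<Sum>i=1..n. i * ?k i) = (\<Sum>i=1..n-j. i * ?k i)"
    by (rule sum_shrink[of "n-j" n ?k "\<lambda>i v. i * v", OF _ supp2]) auto
  have u2: "(\<Sum>i=1..n. ?k i) = (\<Sum>i=1..n-j. ?k i)"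
    by (rule sum_shrink[of "n-j" n ?k "\<lambda>i v. v", OF _ supp2]) auto
  show ?thesis unfolding Kg_def mem_Collect_eq using supp2 t1 t2 u1 u2 by metis
qed

lemma Kg_up:
  assumes j: "1 \<le> j" "j \<le> n" and k: "k \<in> Kg (n - j) N"
  shows "k(j := k j + 1) \<in> Kg n (Suc N)"
proof -
  let ?k = "k(j := k j + 1)"
  have jin: "j \<in> {1..n}" using j by auto
  have supp: "\<forall>i. i \<notin> {1..n-j} \<longrightarrow> k i = 0" and s1: "(\<Sum>i=1..n-j. i * k i) = n - j"
    and s2: "(\<Sum>i=1..n-j. k i) = N" using k by (auto simp: Kg_def)
  have u1: "(\<Sum>i=1..n. i * k i) = (\<Sum>i=1..n-j. i * k i)"
    by (rule sum_shrink[of "n-j" n k "\<lambda>i v. i * v", OF _ supp]) auto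
  have u2: "(\<Sum>i=1..n. k i) = (\<Sum>i=1..n-j. k i)"
    by (rule sum_shrink[of "n-j" n k "\<lambda>i v. v", OF _ supp]) auto
  have a1: "(\<Sum>i=1..n. i * ?k i) + j * k j = (\<Sum>i=1..n. i * k i) + j * (k j + 1)"
    using sum_upd[OF finite_atLeastAtMost jin, of "\<lambda>i v. i * v" k "k j + 1"] by simp
  then have t1: "(\<Sum>i=1..n. i * ?k i) = n" using u1 s1 j by (simp add: algebra_simps)
  have a2: "(\<Sum>i=1..n. ?k i) + k j = (\<Sum>i=1..n. k i) + (k j + 1)"
    using sum_upd[OF finite_atLeastAtMost jin, of "\<lambda>i v. v" k "k j + 1"] by simp
  then have t2: "(\<Sum>i=1..n. ?k i) = Suc N" using u2 s2 by simp
  have supp2: "\<forall>i. i \<notin> {1..n} \<longrightarrow> ?k i = 0"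
  proof (intro allI impI)
    fix i assume i: "i \<notin> {1..n}"
    then have "i \<noteq> j" "i \<notin> {1..n-j}" using jin by auto
    then show "?k i = 0" using supp by simp
  qed
  show ?thesis unfolding Kg_def mem_Collect_eq using supp2 t1 t2 by metis
qed

lemma B_rec:
  assumes n: "1 \<le> n"
  shows "real n * B n (Suc N) = (\<Sum>j=1..n. B (n-j) N)"
proof -
  let ?K = "Kg n (Suc N)"
  have "real n * B n (Suc N) = (\<Sum>k\<in>?K. real n * W n k)"
    by (simp add: B_def sum_distrib_left)
  also have "\<dots> = (\<Sum>k\<in>?K. \<Sum>j=1..n. real j * real (k j) * W n k)"
  proof (rule sum.cong[OF refl])
    fix k assume "k \<in> ?K"
    then have "(\<Sum>j=1..n. j * k j) = n" by (simp add: Kg_def)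
    then have "real n = (\<Sum>j=1..n. real j * real (k j))"
      by (metis (mono_tags, lifting) of_nat_mult of_nat_sum sum.cong)
    then show "real n * W n k = (\<Sum>j=1..n. real j * real (k j) * W n k)"
      by (simp add: sum_distrib_right)
  qed
  also have "\<dots> = (\<Sum>j=1..n. \<Sum>k\<in>?K. real j * real (k j) * W n k)"
    by (rule sum.swap)
  also have "\<dots> = (\<Sum>j=1..n. B (n-j) N)"
  proof (rule sum.cong[OF refl])
    fix j assume "j \<in> {1..n}"
    then have j: "1 \<le> j" "j \<le> n" by auto
    have "(\<Sum>k\<in>?K. real j * real (k j) * W n k) =
          (\<Sum>k\<in>?K. if 1 \<le> k j then real j * real (k j) * W n k else 0)"
      by (rule sum.cong) auto
    also have "\<dots> = (\<Sum>k\<in>{k\<in>?K. 1 \<le> k j}. real j * real (k j) * W n k)"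
      by (rule sum.inter_filter[symmetric]) (rule fin_Kg)
    also have "\<dots> = (\<Sum>k\<in>{k\<in>?K. 1 \<le> k j}. W n (k(j := k j - 1)))"
      by (rule sum.cong) (use W_step j in auto)
    also have "\<dots> = (\<Sum>k\<in>Kg (n-j) N. W n k)"
    proof (rule sum.reindex_bij_betw)
      show "bij_betw (\<lambda>k. k(j := k j - 1)) {k\<in>?K. 1 \<le> k j} (Kg (n-j) N)"
      proof (rule bij_betw_byWitness[where f' = "\<lambda>k. k(j := k j + 1)"])
        show "\<forall>a\<in>{k\<in>?K. 1 \<le> k j}. (a(j := a j - 1))(j := (a(j := a j - 1)) j + 1) = a"
          by auto
        show "\<forall>a'\<in>Kg (n-j) N. (a'(j := a' j + 1))(j := (a'(j := a' j + 1)) j - 1) = a'"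
          by auto
        show "(\<lambda>k. k(j := k j - 1)) ` {k\<in>?K. 1 \<le> k j} \<subseteq> Kg (n-j) N"
          using Kg_down[OF j] by auto
        show "(\<lambda>k. k(j := k j + 1)) ` Kg (n-j) N \<subseteq> {k\<in>?K. 1 \<le> k j}"
          using Kg_up[OF j] by auto
      qed
    qed
    also have "\<dots> = B (n-j) N" unfolding B_def
      by (rule sum.cong[OF refl]) (rule W_shrink, auto simp: Kg_def)
    finally show "(\<Sum>k\<in>?K. real j * real (k j) * W n k) = B (n-j) N" .
  qed
  finally show ?thesis .
qed


lemma A_0: "A 0 s = (if s = 0 then 1 else 0)"
proof -
  have "Sg 0 s = (if s = 0 then {\<lambda>_. 0} else {})" by (auto simp: Sg_def)
  then show ?thesis by (simp add: A_def P_def)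
qed

lemma B_0: "B n 0 = (if n = 0 then 1 else 0)"
proof -
  have "Kg n 0 = (if n = 0 then {\<lambda>_. 0} else {})"
  proof (cases "n = 0")
    case True then show ?thesis by (auto simp: Kg_def)
  next
    case False
    { fix k assume k: "k \<in> Kg n 0"
      then have "\<forall>i\<in>{1..n}. k i = 0" by (simp add: Kg_def)
      then have "(\<Sum>i=1..n. i * k i) = 0" by simp
      then have False using k False by (simp add: Kg_def) }
    then show ?thesis using False by auto
  qed
  then show ?thesis by (simp add: B_def W_def)
qed

lemma B_small: assumes "m < N" shows "B m N = 0"
proof -
  have "Kg m N = {}"
  proof (rule ccontr)
    assume "Kg m N \<noteq> {}"
    then obtain k where k: "k \<in> Kg m N" by auto
    have "(\<Sum>i=1..m. k i) \<le> (\<Sum>i=1..m. i * k i)" by (rule sum_mono) auto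
    then show False using k assms by (simp add: Kg_def)
  qed
  then show ?thesis by (simp add: B_def)
qed

definition shift :: "nat \<Rightarrow> (nat \<Rightarrow> nat) \<Rightarrow> nat \<Rightarrow> nat" where
  "shift a m i = (if i = 1 then a else m (i - 1))"

lemma P_shift:
  assumes a: "a \<le> s" and m: "m \<in> Sg N (s - a)"
  shows "P (Suc N) (shift a m) = 1 / real (s + Suc N) * P N m"
proof -
  have supp: "\<forall>i. i \<notin> {1..N} \<longrightarrow> m i = 0" and sm: "(\<Sum>i=1..N. m i) = s - a"
    using m by (auto simp: Sg_def)
  have m0: "m 0 = 0" using supp by auto
  have tail: "(\<Sum>j=Suc i..Suc N. shift a m j) = (\<Sum>j=i..N. m j)" if "1 \<le> i" for i
  proof -
    have "(\<Sum>j=Suc i..Suc N. shift a m j) = (\<Sum>j=i..N. shift a m (Suc j))"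
      by (rule sum.shift_bounds_cl_Suc_ivl)
    also have "\<dots> = (\<Sum>j=i..N. m j)"
      by (rule sum.cong) (use that in \<open>auto simp: shift_def\<close>)
    finally show ?thesis .
  qed
  have tot: "(\<Sum>j=1..Suc N. shift a m j) = s"
  proof -
    have "(\<Sum>j=1..Suc N. shift a m j) = shift a m 1 + (\<Sum>j=Suc 1..Suc N. shift a m j)"
      by (rule sum.atLeast_Suc_atMost) simp
    also have "\<dots> = a + (s - a)" using tail[of 1] sm by (simp add: shift_def)
    finally show ?thesis using a by simp
  qed
  have "P (Suc N) (shift a m) =
     1 / real ((\<Sum>j=1..Suc N. shift a m j) + (Suc N - 1 + 1)) *
     (\<Prod>i=Suc 1..Suc N. 1 / real ((\<Sum>j=i..Suc N. shift a m j) + (Suc N - i + 1)))"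
    unfolding P_def by (rule prod.atLeast_Suc_atMost) simp
  also have "(\<Prod>i=Suc 1..Suc N. 1 / real ((\<Sum>j=i..Suc N. shift a m j) + (Suc N - i + 1)))
     = (\<Prod>i=1..N. 1 / real ((\<Sum>j=Suc i..Suc N. shift a m j) + (Suc N - Suc i + 1)))"
    by (rule prod.shift_bounds_cl_Suc_ivl)
  also have "\<dots> = P N m" unfolding P_def
  proof (rule prod.cong[OF refl])
    fix i assume "i \<in> {1..N}"
    then have i: "1 \<le> i" by auto
    show "1 / real ((\<Sum>j=Suc i..Suc N. shift a m j) + (Suc N - Suc i + 1)) =
          1 / real ((\<Sum>j=i..N. m j) + (N - i + 1))"
      by (subst tail[OF i]) simp
  qed
  finally have X: "P (Suc N) (shift a m) =
     1 / real ((\<Sum>j=1..Suc N. shift a m j) + (Suc N - 1 + 1)) * P N m" .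
  show ?thesis using X by (simp only: tot) simp
qed

lemma A_rec: "A (Suc N) s = 1 / real (s + Suc N) * (\<Sum>a=0..s. A N (s - a))"
proof -
  let ?S = "Sigma {0..s} (\<lambda>a. Sg N (s - a))"
  have bij: "bij_betw (\<lambda>(a, m). shift a m) ?S (Sg (Suc N) s)"
  proof (rule bij_betw_byWitness[where f' = "\<lambda>m. (m 1, \<lambda>i. if i = 0 then 0 else m (Suc i))"])
    show "\<forall>x\<in>?S. (\<lambda>m. (m 1, \<lambda>i. if i = 0 then 0 else m (Suc i))) ((\<lambda>(a, m). shift a m) x) = x"
    proof
      fix x assume x: "x \<in> ?S"
      obtain a m where am: "x = (a, m)" by (cases x)
      then have "m \<in> Sg N (s - a)" using x by auto
      then have "m 0 = 0" by (auto simp: Sg_def)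
      then have eq: "(\<lambda>i. if i = 0 then 0 else shift a m (Suc i)) = m"
        by (auto simp: shift_def)
      show "(\<lambda>m. (m 1, \<lambda>i. if i = 0 then 0 else m (Suc i))) ((\<lambda>(a, m). shift a m) x) = x"
        by (simp only: am prod.case eq) (simp add: shift_def)
    qed
    show "\<forall>y\<in>Sg (Suc N) s. (\<lambda>(a, m). shift a m) ((\<lambda>m. (m 1, \<lambda>i. if i = 0 then 0 else m (Suc i))) y) = y"
    proof
      fix y assume y: "y \<in> Sg (Suc N) s"
      then have "y 0 = 0" by (auto simp: Sg_def)
      then show "(\<lambda>(a, m). shift a m) ((\<lambda>m. (m 1, \<lambda>i. if i = 0 then 0 else m (Suc i))) y) = y"
        by (auto simp: shift_def fun_eq_iff le_Suc_eq)
    qed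
    show "(\<lambda>(a, m). shift a m) ` ?S \<subseteq> Sg (Suc N) s"
    proof clarify
      fix a m assume a: "a \<in> {0..s}" and m: "m \<in> Sg N (s - a)"
      have supp: "\<forall>i. i \<notin> {1..N} \<longrightarrow> m i = 0" and sm: "(\<Sum>i=1..N. m i) = s - a"
        using m by (auto simp: Sg_def)
      have s1: "\<forall>i. i \<notin> {1..Suc N} \<longrightarrow> shift a m i = 0"
      proof (intro allI impI)
        fix i assume "i \<notin> {1..Suc N}"
        then have "i \<noteq> 1" "i - 1 \<notin> {1..N}" by auto
        then show "shift a m i = 0" using supp by (simp add: shift_def)
      qed
      have "(\<Sum>j=1..Suc N. shift a m j) = shift a m 1 + (\<Sum>j=Suc 1..Suc N. shift a m j)"
        by (rule sum.atLeast_Suc_atMost) simp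
      also have "(\<Sum>j=Suc 1..Suc N. shift a m j) = (\<Sum>j=1..N. shift a m (Suc j))"
        by (rule sum.shift_bounds_cl_Suc_ivl)
      also have "\<dots> = (\<Sum>j=1..N. m j)" by (rule sum.cong) (auto simp: shift_def)
      finally have "(\<Sum>j=1..Suc N. shift a m j) = s" using sm a by (simp add: shift_def)
      then show "shift a m \<in> Sg (Suc N) s" using s1 by (simp add: Sg_def)
    qed
    show "(\<lambda>m. (m 1, \<lambda>i. if i = 0 then 0 else m (Suc i))) ` Sg (Suc N) s \<subseteq> ?S"
    proof
      fix x assume "x \<in> (\<lambda>m. (m 1, \<lambda>i. if i = 0 then 0 else m (Suc i))) ` Sg (Suc N) s"
      then obtain y where x: "x = (y 1, \<lambda>i. if i = 0 then 0 else y (Suc i))"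
        and y: "y \<in> Sg (Suc N) s" by blast
      have supp: "\<forall>i. i \<notin> {1..Suc N} \<longrightarrow> y i = 0" and sm: "(\<Sum>i=1..Suc N. y i) = s"
        using y by (auto simp: Sg_def)
      have "(\<Sum>j=1..Suc N. y j) = y 1 + (\<Sum>j=Suc 1..Suc N. y j)"
        by (rule sum.atLeast_Suc_atMost) simp
      also have "(\<Sum>j=Suc 1..Suc N. y j) = (\<Sum>j=1..N. y (Suc j))"
        by (rule sum.shift_bounds_cl_Suc_ivl)
      also have "\<dots> = (\<Sum>j=1..N. if j = 0 then 0 else y (Suc j))" by (rule sum.cong) auto
      finally have e: "y 1 + (\<Sum>j=1..N. if j = 0 then 0 else y (Suc j)) = s" using sm by simp
      have s1: "\<forall>i. i \<notin> {1..N} \<longrightarrow> (if i = 0 then 0 else y (Suc i)) = 0"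
        using supp by auto
      show "x \<in> ?S" unfolding x
        using e s1 by (auto simp: Sg_def)
    qed
  qed
  have "A (Suc N) s = (\<Sum>x\<in>?S. P (Suc N) ((\<lambda>(a, m). shift a m) x))"
    unfolding A_def using sum.reindex_bij_betw[OF bij, of "P (Suc N)"] by simp
  also have "\<dots> = (\<Sum>a=0..s. \<Sum>m\<in>Sg N (s - a). P (Suc N) (shift a m))"
    using sum.Sigma[of "{0..s}" "\<lambda>a. Sg N (s-a)" "\<lambda>a m. P (Suc N) (shift a m)"] fin_Sg
    by (simp add: split_def)
  also have "\<dots> = (\<Sum>a=0..s. \<Sum>m\<in>Sg N (s - a). 1 / real (s + Suc N) * P N m)"
    by (intro sum.cong refl P_shift) auto
  also have "\<dots> = 1 / real (s + Suc N) * (\<Sum>a=0..s. A N (s - a))"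
    by (simp add: A_def sum_distrib_left)
  finally show ?thesis .
qed

lemma A_B: "A N s = B (s + N) N"
proof (induction N arbitrary: s)
  case 0
  then show ?case by (simp add: A_0 B_0)
next
  case (Suc N)
  let ?n = "s + Suc N"
  have "real ?n * B ?n (Suc N) = (\<Sum>j=1..?n. B (?n - j) N)" by (rule B_rec) simp
  also have "\<dots> = (\<Sum>j=1..Suc s. B (?n - j) N)"
    by (rule sum.mono_neutral_right) (auto intro!: B_small)
  also have "\<dots> = (\<Sum>a=0..s. B (?n - Suc a) N)"
    using sum.shift_bounds_cl_Suc_ivl[of "\<lambda>j. B (?n - j) N" 0 s] by simp
  also have "\<dots> = (\<Sum>a=0..s. A N (s - a))"
    by (rule sum.cong) (auto simp: Suc.IH)
  finally have "real ?n * B ?n (Suc N) = (\<Sum>a=0..s. A N (s - a))" .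
  then show ?case by (simp add: A_rec field_simps)
qed

theorem lemma5:
  fixes n q :: nat
  assumes "q < n"
  shows "(\<Sum>m\<in>S_set n q. pi_m n q m) =
         (\<Sum>k\<in>K_set n q. 1 / (\<Prod>j=1..n. fact (k j) * real j ^ k j))"
proof -
  have "S_set n q = Sg (n - q) q" by (simp add: S_set_def Sg_def)
  moreover have "\<And>m. pi_m n q m = P (n - q) m" by (simp add: pi_m_def P_def)
  moreover have "K_set n q = Kg n (n - q)" by (simp add: K_set_def Kg_def)
  ultimately have "(\<Sum>m\<in>S_set n q. pi_m n q m) = A (n - q) q \<and>
     (\<Sum>k\<in>K_set n q. 1 / (\<Prod>j=1..n. fact (k j) * real j ^ k j)) = B n (n - q)"
    by (simp add: A_def B_def W_def)
  moreover have "A (n - q) q = B n (n - q)" using A_B[of "n - q" q] assms by simp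
  ultimately show ?thesis by simp
qed

end
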